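(* Let $\mathbb{X}$ be a Banach space, $\varphi:\mathbb{X}\to\mathbb{R}\cup\{+\infty\}$ a proper lower semicontinuous function, $\mathbf{S}_\varphi:=\{x:\varphi(x)\le0\}$ and $\bar x\in\mathbf{S}_\varphi$. Suppose that ${\rm bd}(\mathbf{S}_\varphi)\subseteq\varphi^{-1}(0)$, that $\varphi$ has the epigraphical Shapiro first order contact property at $\bar x$, and that $\mathbf{S}_\varphi$ has the Shapiro first order contact property around $\bar x$. Then the inequality $\varphi(x)\le0$ has a local error bound at $\bar x$ if and only if $$\limsup_{x\xrightarrow{{\rm bd}(\mathbf{S}_\varphi)}\bar x}\mathbf{e}\big(\{h\in\mathbb{X}:\varphi'_H(x;h)\le1\},\ \mathbf{T}^{\mathbf B}(\mathbf{S}_\varphi,x)\big)<+\infty.$$ Moreover, $$\tau(\mathbf{S}_\varphi,\bar x)=\limsup_{x\xrightarrow{{\rm bd}(\mathbf{S}_\varphi)}\bar x}\mathbf{e}\big(\{h\in\mathbb{X}:\varphi'_H(x;h)\le1\},\ \mathbf{T}^{\mathbf B}(\mathbf{S}_\varphi,x)\big).$$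
   Context: $\mathbf{B}(a,\delta)$ is the open ball with center $a$ and radius $\delta$; ${\rm bd}$ denotes boundary; $\mathbf{d}(x,D):=\inf\{\|x-y\|:y\in D\}$. Excess: $\mathbf{e}(C,D):=\sup_{x\in C}\mathbf{d}(x,D)$, with $\mathbf{e}(\emptyset,D)=0$ if $D\neq\emptyset$ and $=\infty$ otherwise. $\varphi'_H(x;h):=\liminf_{t\to0^+,\,h'\to h}\frac{\varphi(x+th')-\varphi(x)}{t}$ (lower Hadamard directional derivative). Bouligand tangent cone $\mathbf{T}^{\mathbf B}(C,c)$: all $v$ with $v_n\to v$, $t_n\downarrow0$, $c+t_nv_n\in C$. A closed set $C$ has the Shapiro first order contact property at $a\in C$ if for every $\varepsilon>0$ there is $\delta>0$ with $\mathbf{d}(x-u,\mathbf{T}^{\mathbf B}(C,u))\le\varepsilon\|x-u\|$ for all $x,u\in C\cap\mathbf{B}(a,\delta)$; around $\bar x$ means at every point of $C\cap U$ for some neighborhood $U$ of $\bar x$. Epigraphical Shapiro first order contact property at $\bar x$: ${\rm epi}(\varphi)\subseteq\mathbb{X}\times\mathbb{R}$ (norm $\|x\|+|\alpha|$) has the Shapiro first order contact property at $(\bar x,\varphi(\bar x))$. Local error bound at $\bar x$: there exist $\tau,\delta>0$ with $\mathbf{d}(x,\mathbf{S}_\varphi)\le\tau\max\{\varphi(x),0\}$ for all $x\in\mathbf{B}(\bar x,\delta)$; the modulus $\tau(\mathbf{S}_\varphi,\bar x)$ is the infimum of all $\tau>0$ for which such a $\delta$ exists (with $\inf\emptyset=+\infty$).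 $\limsup_{x\xrightarrow{D}\bar x}F(x):=\lim_{\delta\downarrow0}\sup\{F(x):x\in D\cap\mathbf{B}(\bar x,\delta)\}$, with the convention $\sup\emptyset=0$. *)

theory Defs
  imports "HOL-Analysis.Analysis"
begin

definition lsc :: "('a::topological_space \<Rightarrow> ereal) \<Rightarrow> bool" where
  "lsc \<phi> \<longleftrightarrow> (\<forall>x. \<phi> x \<le> Liminf (at x) \<phi>)"

definition proper_fun :: "('a \<Rightarrow> ereal) \<Rightarrow> bool" where
  "proper_fun \<phi> \<longleftrightarrow> (\<forall>x. \<phi> x \<noteq> -\<infinity>) \<and> (\<exists>x. \<phi> x \<noteq> \<infinity>)"

definition sublevel0 :: "('a \<Rightarrow> ereal) \<Rightarrow> 'a set" where
  "sublevel0 \<phi> = {x. \<phi> x \<le> 0}"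

(* excess e(C,D) = sup_{x in C} d(x,D); e(\<emptyset>,D) = 0 if D \<noteq> \<emptyset>, = \<infinity> otherwise;
   for D = \<emptyset>, d(x,\<emptyset>) = inf \<emptyset> = \<infinity>, so e(C,\<emptyset>) = \<infinity> *)
definition excess :: "'a::metric_space set \<Rightarrow> 'a set \<Rightarrow> ereal" where
  "excess C D = (if D = {} then \<infinity> else if C = {} then 0
                 else (SUP x\<in>C. ereal (infdist x D)))"

definition hadamard_dd :: "('a::real_normed_vector \<Rightarrow> ereal) \<Rightarrow> 'a \<Rightarrow> 'a \<Rightarrow> ereal" where
  "hadamard_dd \<phi> x h =
     Liminf (at_right (0::real) \<times>\<^sub>F nhds h)
       (\<lambda>(t, h'). (\<phi> (x + t *\<^sub>R h') - \<phi> x) / ereal t)"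

definition bouligand_cone :: "'a::real_normed_vector set \<Rightarrow> 'a \<Rightarrow> 'a set" where
  "bouligand_cone C c = {v. \<exists>vs ts. vs \<longlonglongrightarrow> v \<and> ts \<longlonglongrightarrow> 0 \<and> (\<forall>n. ts n > 0)
                                 \<and> (\<forall>n. c + ts n *\<^sub>R vs n \<in> C)}"

definition shapiro_at :: "'a::real_normed_vector set \<Rightarrow> 'a \<Rightarrow> bool" where
  "shapiro_at C a \<longleftrightarrow> closed C \<and> a \<in> C \<and>
     (\<forall>\<epsilon>>0. \<exists>\<delta>>0. \<forall>x\<in>C \<inter> ball a \<delta>. \<forall>u\<in>C \<inter> ball a \<delta>.
        infdist (x - u) (bouligand_cone C u) \<le> \<epsilon> * norm (x - u))"

definition shapiro_around :: "'a::real_normed_vector set \<Rightarrow> 'a \<Rightarrow> bool" where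
  "shapiro_around C a \<longleftrightarrow> (\<exists>U. open U \<and> a \<in> U \<and> (\<forall>u\<in>C \<inter> U. shapiro_at C u))"

definition epi :: "('a \<Rightarrow> ereal) \<Rightarrow> ('a \<times> real) set" where
  "epi \<phi> = {(x, \<alpha>). \<phi> x \<le> ereal \<alpha>}"

definition sum_norm :: "'a::real_normed_vector \<times> real \<Rightarrow> real" where
  "sum_norm p = norm (fst p) + \<bar>snd p\<bar>"

definition epi_shapiro_at :: "('a::real_normed_vector \<Rightarrow> ereal) \<Rightarrow> 'a \<Rightarrow> bool" where
  "epi_shapiro_at \<phi> xb \<longleftrightarrow>
     (let E = epi \<phi>; c = (xb, real_of_ereal (\<phi> xb)) in
      closed E \<and> \<bar>\<phi> xb\<bar> \<noteq> \<infinity> \<and>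
      (\<forall>\<epsilon>>0. \<exists>\<delta>>0. \<forall>p\<in>E. \<forall>q\<in>E. sum_norm (p - c) < \<delta> \<longrightarrow> sum_norm (q - c) < \<delta> \<longrightarrow>
          (INF w\<in>bouligand_cone E q. sum_norm (p - q - w)) \<le> \<epsilon> * sum_norm (p - q)))"

definition error_bound_with :: "('a::real_normed_vector \<Rightarrow> ereal) \<Rightarrow> 'a \<Rightarrow> real \<Rightarrow> bool" where
  "error_bound_with \<phi> xb \<tau> \<longleftrightarrow> (\<exists>\<delta>>0. \<forall>x\<in>ball xb \<delta>.
      ereal (infdist x (sublevel0 \<phi>)) \<le> ereal \<tau> * max (\<phi> x) 0)"

definition local_error_bound :: "('a::real_normed_vector \<Rightarrow> ereal) \<Rightarrow> 'a \<Rightarrow> bool" where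
  "local_error_bound \<phi> xb \<longleftrightarrow> (\<exists>\<tau>>0. error_bound_with \<phi> xb \<tau>)"

(* modulus: infimum of admissible \<tau> > 0, inf \<emptyset> = +\<infinity> *)
definition eb_modulus :: "('a::real_normed_vector \<Rightarrow> ereal) \<Rightarrow> 'a \<Rightarrow> ereal" where
  "eb_modulus \<phi> xb = Inf (ereal ` {\<tau>. \<tau> > 0 \<and> error_bound_with \<phi> xb \<tau>})"

(* limsup_{x \<rightarrow>_D xbar} F(x) := lim_{\<delta>\<down>0} sup {F x : x \<in> D \<inter> B(xbar,\<delta>)}, sup \<emptyset> = 0.
   The inner quantity is monotone in \<delta> for nonnegative F, so the limit is the infimum. *)
definition limsup_within :: "'a::metric_space set \<Rightarrow> 'a \<Rightarrow> ('a \<Rightarrow> ereal) \<Rightarrow> ereal" where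
  "limsup_within D xb F = (INF \<delta>\<in>{0<..}.
      (if D \<inter> ball xb \<delta> = {} then 0 else (SUP x\<in>D \<inter> ball xb \<delta>. F x)))"

end

theory Submission
  imports Defs
begin


lemma Liminf_filter_antimono:
  fixes f :: "'b \<Rightarrow> 'c::{complete_linorder,dense_linorder}"
  assumes "G \<le> F" shows "Liminf F f \<le> Liminf G f"
proof -
  have "\<forall>y<Liminf F f. \<forall>\<^sub>F x in F. y < f x" using le_Liminf_iff by blast
  then have "\<forall>y<Liminf F f. \<forall>\<^sub>F x in G. y < f x" using assms filter_leD by blast
  then show ?thesis using le_Liminf_iff by blast
qed

lemma lsc_closed:
  assumes "lsc \<phi>" shows "closed (sublevel0 \<phi>)"
proof -
  have "open (- sublevel0 \<phi>)"
  proof (subst open_subopen, intro ballI)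
    fix x assume "x \<in> - sublevel0 \<phi>"
    then have x0: "0 < \<phi> x" by (auto simp: sublevel0_def)
    have "\<phi> x \<le> Liminf (at x) \<phi>" using assms by (auto simp: lsc_def)
    then have "\<forall>\<^sub>F y in at x. 0 < \<phi> y" using le_Liminf_iff x0 by blast
    then obtain U where U: "open U" "x \<in> U" "\<And>y. y \<in> U \<Longrightarrow> y \<noteq> x \<Longrightarrow> 0 < \<phi> y"
      unfolding eventually_at_topological by blast
    show "\<exists>T. open T \<and> x \<in> T \<and> T \<subseteq> - sublevel0 \<phi>"
      using U x0 by (intro exI[of _ U]) (force simp: sublevel0_def not_le)
  qed
  then show ?thesis by (simp add: closed_open)
qed

lemma bouligand_zero:
  assumes "c \<in> C" shows "0 \<in> bouligand_cone C c"
  unfolding bouligand_cone_def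
proof (intro CollectI exI conjI allI)
  show "(\<lambda>n. 0) \<longlonglongrightarrow> (0::'a)" by simp
  show "(\<lambda>n. 1 / (real n + 1)) \<longlonglongrightarrow> 0" using LIMSEQ_inverse_real_of_nat by (simp add: divide_inverse add.commute)
qed (use assms in auto)



lemma bouligand_scale:
  assumes "v \<in> bouligand_cone C c" "k > 0" shows "k *\<^sub>R v \<in> bouligand_cone C c"
proof -
  obtain vs ts where v: "vs \<longlonglongrightarrow> v" "ts \<longlonglongrightarrow> 0" "\<forall>n. ts n > 0" "\<forall>n. c + ts n *\<^sub>R vs n \<in> C"
    using assms(1) by (auto simp: bouligand_cone_def)
  show ?thesis unfolding bouligand_cone_def
  proof (intro CollectI exI conjI allI)
    show "(\<lambda>n. k *\<^sub>R vs n) \<longlonglongrightarrow> k *\<^sub>R v" by (intro tendsto_intros v)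
    show "(\<lambda>n. ts n / k) \<longlonglongrightarrow> 0" using tendsto_divide_zero[OF v(2)] .
    fix n
    show "ts n / k > 0" using v assms by auto
    show "c + (ts n / k) *\<^sub>R (k *\<^sub>R vs n) \<in> C" using v(4) assms(2) by simp
  qed
qed

lemma infdist_approx:
  assumes "A \<noteq> {}" "e > 0" shows "\<exists>a\<in>A. dist x a < infdist x A + e"
proof -
  have "(INF a\<in>A. dist x a) < infdist x A + e" using assms by (simp add: infdist_notempty)
  moreover have "bdd_below ((\<lambda>a. dist x a) ` A)" by (auto intro!: bdd_belowI[of _ 0])
  ultimately show ?thesis using cINF_less_iff[OF assms(1)] by blast
qed

lemma infdist_scale_le:
  fixes T :: "'a::real_normed_vector set"
  assumes cone: "\<And>w k. w \<in> T \<Longrightarrow> k > 0 \<Longrightarrow> k *\<^sub>R w \<in> T" and ne: "T \<noteq> {}" and k: "k > 0"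
  shows "infdist (k *\<^sub>R v) T \<le> k * infdist v T"
proof (rule field_le_epsilon)
  fix e :: real assume e: "0 < e"
  obtain w where w: "w \<in> T" "dist v w < infdist v T + e / k" using infdist_approx[OF ne, of "e/k" v] e k by auto
  have "infdist (k *\<^sub>R v) T \<le> dist (k *\<^sub>R v) (k *\<^sub>R w)" using cone[OF w(1) k] by (rule infdist_le)
  also have "\<dots> = k * dist v w" using k by (simp add: dist_norm scaleR_diff_right[symmetric])
  also have "\<dots> \<le> k * (infdist v T + e / k)" using w k by simp
  also have "\<dots> = k * infdist v T + e" using k by (simp add: field_simps)
  finally show "infdist (k *\<^sub>R v) T \<le> k * infdist v T + e" .
qed

lemma bouligand_ne: "c \<in> C \<Longrightarrow> bouligand_cone C c \<noteq> {}"
  using bouligand_zero by blast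

lemma excess_nonneg: "excess C D \<ge> 0"
proof -
  have "(SUP x\<in>C. ereal (infdist x D)) \<ge> 0" if ne: "C \<noteq> {}"
  proof -
    obtain x where "x \<in> C" using ne by blast
    then have "ereal (infdist x D) \<le> (SUP x\<in>C. ereal (infdist x D))" by (rule SUP_upper)
    then show ?thesis using infdist_nonneg[of x D] by (meson ereal_less_eq(5) order_trans)
  qed
  then show ?thesis by (auto simp: excess_def)
qed

lemma excess_ge:
  assumes "h \<in> C" "D \<noteq> {}" shows "ereal (infdist h D) \<le> excess C D"
  using assms by (auto simp: excess_def intro: SUP_upper)

lemma excess_le:
  assumes "D \<noteq> {}" "\<And>h. h \<in> C \<Longrightarrow> infdist h D \<le> b" "b \<ge> 0"
  shows "excess C D \<le> ereal b"
  using assms by (auto simp: excess_def intro!: SUP_least)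

lemma limsup_within_nonneg:
  assumes "\<And>x. F x \<ge> 0" shows "limsup_within D xb F \<ge> 0"
  unfolding limsup_within_def
  by (rule INF_greatest) (auto intro: SUP_upper2 assms)



lemma hd_from_seq:
  fixes \<phi> :: "'a::real_normed_vector \<Rightarrow> ereal"
  assumes s: "\<phi> s = 0" and ts: "ts \<longlonglongrightarrow> 0" "\<forall>n. ts n > 0" and hs: "hs \<longlonglongrightarrow> h"
    and as: "as \<longlonglongrightarrow> \<alpha>" and le: "\<forall>n. \<phi> (s + ts n *\<^sub>R hs n) \<le> ereal (ts n * as n)"
    and b: "\<beta> > 0"
  shows "hadamard_dd \<phi> s ((1/\<beta>) *\<^sub>R h) \<le> ereal (\<alpha>/\<beta>)"
proof -
  define g where "g n = (\<beta> * ts n, (1/\<beta>) *\<^sub>R hs n)" for n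
  define f where "f = (\<lambda>(t::real, h'). (\<phi> (s + t *\<^sub>R h') - \<phi> s) / ereal t)"
  have "filterlim (\<lambda>n. \<beta> * ts n) (at_right 0) sequentially"
  proof (rule tendsto_imp_filterlim_at_right)
    show "(\<lambda>n. \<beta> * ts n) \<longlonglongrightarrow> 0" using tendsto_mult_right_zero[OF ts(1)] .
    show "\<forall>\<^sub>F n in sequentially. 0 < \<beta> * ts n" using ts(2) b by simp
  qed
  moreover have "(\<lambda>n. (1/\<beta>) *\<^sub>R hs n) \<longlonglongrightarrow> (1/\<beta>) *\<^sub>R h" by (intro tendsto_intros hs)
  ultimately have lim: "filterlim g (at_right 0 \<times>\<^sub>F nhds ((1/\<beta>) *\<^sub>R h)) sequentially"
    unfolding g_def by (rule filterlim_Pair)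
  have pw: "f (g n) \<le> ereal (as n / \<beta>)" for n
  proof -
    have t: "\<beta> * ts n > 0" using ts(2) b by simp
    have "f (g n) = \<phi> (s + ts n *\<^sub>R hs n) / ereal (\<beta> * ts n)"
      using b by (simp add: f_def g_def s)
    also have "\<dots> \<le> ereal (ts n * as n) / ereal (\<beta> * ts n)"
      using le t by (intro ereal_divide_right_mono) auto
    also have "\<dots> = ereal (as n / \<beta>)" using t ts(2)[rule_format, of n] b by (simp add: ereal_divide)
    finally show ?thesis .
  qed
  have "hadamard_dd \<phi> s ((1/\<beta>) *\<^sub>R h) = Liminf (at_right 0 \<times>\<^sub>F nhds ((1/\<beta>) *\<^sub>R h)) f"
    by (simp add: hadamard_dd_def f_def)
  also have "\<dots> \<le> Liminf (filtermap g sequentially) f"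
    using lim unfolding filterlim_def by (rule Liminf_filter_antimono)
  also have "\<dots> \<le> Liminf sequentially (\<lambda>n. f (g n))" by (rule Liminf_filtermap_le)
  also have "\<dots> \<le> Liminf sequentially (\<lambda>n. ereal (as n / \<beta>))"
    by (rule Liminf_mono) (simp add: pw)
  also have "\<dots> = ereal (\<alpha> / \<beta>)"
    using b by (intro lim_imp_Liminf) (auto intro!: tendsto_intros as)
  finally show ?thesis .
qed

lemma tangent_lower:
  fixes S :: "'a::real_normed_vector set"
  assumes s0: "s0 \<in> S" and opt: "\<forall>y\<in>S. dist x s0 \<le> dist x y + \<eta> * dist y s0" and eta: "0 < \<eta>"
  shows "(1 - 2*\<eta>) * dist x s0 \<le> infdist (x - s0) (bouligand_cone S s0)"
proof -
  let ?N = "dist x s0"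
  have key: "?N - \<eta> * norm v \<le> norm (x - s0 - v)" if v: "v \<in> bouligand_cone S s0" for v
  proof -
    obtain vs ts where vt: "vs \<longlonglongrightarrow> v" "ts \<longlonglongrightarrow> 0" "\<forall>n. ts n > 0" "\<forall>n. s0 + ts n *\<^sub>R vs n \<in> S"
      using v by (auto simp: bouligand_cone_def)
    have ev: "\<forall>\<^sub>F n in sequentially. ts n < 1"
      using vt(2) by (rule order_tendstoD) simp
    have "(\<lambda>n. ?N - norm (v - vs n) - \<eta> * norm (vs n)) \<longlonglongrightarrow> ?N - norm (v - v) - \<eta> * norm v"
      by (intro tendsto_intros vt)
    then have lim: "(\<lambda>n. ?N - norm (v - vs n) - \<eta> * norm (vs n)) \<longlonglongrightarrow> ?N - \<eta> * norm v" by simp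
    show ?thesis
    proof (rule tendsto_upperbound[OF lim _ sequentially_bot])
      show "\<forall>\<^sub>F n in sequentially. ?N - norm (v - vs n) - \<eta> * norm (vs n) \<le> norm (x - s0 - v)"
        using ev
      proof eventually_elim
        case (elim n)
        define t where "t = ts n"
        have t: "0 < t" "t < 1" using elim vt(3) by (auto simp: t_def)
        have "?N \<le> dist x (s0 + t *\<^sub>R vs n) + \<eta> * dist (s0 + t *\<^sub>R vs n) s0"
          using opt vt(4) by (auto simp: t_def)
        also have "dist (s0 + t *\<^sub>R vs n) s0 = t * norm (vs n)" using t by (simp add: dist_norm)
        also have "dist x (s0 + t *\<^sub>R vs n) \<le> norm (x - s0 - t *\<^sub>R v) + t * norm (v - vs n)"
        proof -
          have "x - (s0 + t *\<^sub>R vs n) = (x - s0 - t *\<^sub>R v) + t *\<^sub>R (v - vs n)"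
            by (simp add: algebra_simps)
          then have "norm (x - (s0 + t *\<^sub>R vs n)) \<le> norm (x - s0 - t *\<^sub>R v) + norm (t *\<^sub>R (v - vs n))"
            by (metis norm_triangle_ineq)
          then show ?thesis using t by (simp add: dist_norm)
        qed
        also have "norm (x - s0 - t *\<^sub>R v) \<le> (1 - t) * ?N + t * norm (x - s0 - v)"
        proof -
          have "x - s0 - t *\<^sub>R v = (1 - t) *\<^sub>R (x - s0) + t *\<^sub>R (x - s0 - v)"
            by (simp add: algebra_simps)
          then have "norm (x - s0 - t *\<^sub>R v) \<le> norm ((1 - t) *\<^sub>R (x - s0)) + norm (t *\<^sub>R (x - s0 - v))"
            by (metis norm_triangle_ineq)
          then show ?thesis using t by (simp add: dist_norm)
        qed
        finally have "?N \<le> (1 - t) * ?N + t * norm (x - s0 - v) + t * norm (v - vs n) + \<eta> * (t * norm (vs n))"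
          by simp
        then have "t * ?N \<le> t * (norm (x - s0 - v) + norm (v - vs n) + \<eta> * norm (vs n))"
          by (simp add: algebra_simps)
        then have "?N \<le> norm (x - s0 - v) + norm (v - vs n) + \<eta> * norm (vs n)"
          using t by simp
        then show ?case by simp
      qed
    qed
  qed
  have ne: "bouligand_cone S s0 \<noteq> {}" using bouligand_ne[OF s0] .
  show ?thesis unfolding infdist_notempty[OF ne]
  proof (rule cINF_greatest[OF ne])
    fix v assume v: "v \<in> bouligand_cone S s0"
    have k: "?N - \<eta> * norm v \<le> norm (x - s0 - v)" using key[OF v] .
    show "(1 - 2 * \<eta>) * ?N \<le> dist (x - s0) v"
    proof (cases "norm v \<le> 2 * ?N")
      case True
      then have "\<eta> * norm v \<le> \<eta> * (2 * ?N)" using eta by (simp add: mult_left_mono)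
      then show ?thesis using k by (simp add: dist_norm algebra_simps)
    next
      case False
      have "norm v - ?N \<le> norm (x - s0 - v)"
      proof -
        have "norm v \<le> norm (x - s0) + norm (x - s0 - v)"
          using norm_triangle_ineq[of "x - s0" "-(x - s0 - v)"] by (simp add: norm_minus_commute)
        then show ?thesis by (simp add: dist_norm)
      qed
      moreover have "0 \<le> \<eta> * (2 * ?N)" using eta by simp
      ultimately show ?thesis using False by (simp add: dist_norm algebra_simps)
    qed
  qed
qed



lemma eps_bound:
  fixes a b K :: real
  assumes K: "K > 0" and h: "\<And>\<epsilon>. 0 < \<epsilon> \<Longrightarrow> \<epsilon> < 1 \<Longrightarrow> a \<le> b + \<epsilon> * K"
  shows "a \<le> b"
proof (rule field_le_epsilon)
  fix e :: real assume e: "0 < e"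
  define \<epsilon> where "\<epsilon> = min (1/2) (e / K)"
  have "0 < \<epsilon>" "\<epsilon> < 1" using e K by (auto simp: \<epsilon>_def)
  then have "a \<le> b + \<epsilon> * K" by (rule h)
  moreover have "\<epsilon> * K \<le> e / K * K" using K by (intro mult_right_mono) (auto simp: \<epsilon>_def)
  ultimately show "a \<le> b + e" using K by simp
qed

lemma dir1_point:
  fixes \<phi> :: "'a::real_normed_vector \<Rightarrow> ereal"
  assumes xS: "x \<in> S" and \<phi>x: "\<phi> x = 0" and sh: "shapiro_at S x"
    and rho: "\<rho>0 > 0" and eb: "\<forall>y\<in>ball x \<rho>0. ereal (infdist y S) \<le> ereal \<tau> * max (\<phi> y) 0"
    and tau: "\<tau> > 0"
    and hd: "hadamard_dd \<phi> x h \<le> 1"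
  shows "infdist h (bouligand_cone S x) \<le> \<tau>"
proof -
  let ?T = "bouligand_cone S x"
  define K1 where "K1 = 2*\<tau> + 2 + norm h"
  have K1: "K1 > 0" using tau by (simp add: K1_def add_pos_nonneg)
  have Tne: "?T \<noteq> {}" using bouligand_ne[OF xS] .
  have Sne: "S \<noteq> {}" using xS by blast
  show ?thesis
  proof (rule eps_bound[of "K1 + 2 + \<tau>"])
    show "K1 + 2 + \<tau> > 0" using K1 tau by simp
    fix \<epsilon> :: real assume e: "0 < \<epsilon>" "\<epsilon> < 1"
    obtain \<delta>s where ds: "\<delta>s > 0" and shp: "\<forall>a\<in>S \<inter> ball x \<delta>s. \<forall>u\<in>S \<inter> ball x \<delta>s.
        infdist (a - u) (bouligand_cone S u) \<le> \<epsilon> * norm (a - u)"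
      using sh e unfolding shapiro_at_def by blast
    define \<rho> where "\<rho> = min (\<rho>0 / (norm h + 1)) (\<delta>s / K1)"
    have nh1: "norm h + 1 > 0" by (simp add: add_nonneg_pos)
    have rpos: "\<rho> > 0" using rho ds K1 nh1 by (simp add: \<rho>_def)
    define f where "f = (\<lambda>(t::real, h'). (\<phi> (x + t *\<^sub>R h') - \<phi> x) / ereal t)"
    let ?F = "at_right (0::real) \<times>\<^sub>F nhds h"
    have "Liminf ?F f \<le> 1" using hd by (simp add: hadamard_dd_def f_def)
    then have "\<not> ereal (1 + \<epsilon>) \<le> Liminf ?F f" using e by (auto simp: not_le intro: le_less_trans)
    then obtain y where y: "y < ereal (1 + \<epsilon>)" "\<not> (\<forall>\<^sub>F p in ?F. y < f p)"
      using le_Liminf_iff by blast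
    then have fr: "\<exists>\<^sub>F p in ?F. f p \<le> y" by (simp add: not_eventually not_less)
    have ev: "\<forall>\<^sub>F p in ?F. 0 < fst p \<and> fst p < \<rho> \<and> dist (snd p) h < \<epsilon>"
      unfolding eventually_prod_filter
    proof (intro exI conjI allI impI)
      show "\<forall>\<^sub>F t in at_right (0::real). t \<in> {0<..<\<rho>}" using eventually_at_right_real[OF rpos] .
      show "\<forall>\<^sub>F h' in nhds h. dist h' h < \<epsilon>" using e by (auto simp: eventually_nhds_metric)
    qed auto
    obtain t h' where th: "f (t, h') \<le> y" "0 < t" "t < \<rho>" "dist h' h < \<epsilon>"
      using frequently_ex[OF frequently_eventually_frequently[OF fr ev]] by auto
    have "\<phi> (x + t *\<^sub>R h') / ereal t < ereal (1 + \<epsilon>)"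
      using th y \<phi>x by (auto simp: f_def)
    then have phiy: "\<phi> (x + t *\<^sub>R h') < ereal ((1 + \<epsilon>) * t)"
      using th(2) by (subst (asm) ereal_divide_less_iff) auto
    define yv where "yv = x + t *\<^sub>R h'"
    have nh': "norm h' \<le> norm h + 1"
      using th(4) e norm_triangle_ineq2[of h' h] by (simp add: dist_norm)
    have "dist yv x = t * norm h'" using th by (simp add: yv_def dist_norm)
    also have "\<dots> \<le> t * (norm h + 1)" using th nh' by (simp add: mult_left_mono)
    also have "\<dots> < \<rho> * (norm h + 1)" using th nh1 by (intro mult_strict_right_mono) auto
    also have "\<dots> \<le> \<rho>0" proof -
      have "\<rho> \<le> \<rho>0 / (norm h + 1)" by (simp add: \<rho>_def)
      then show ?thesis using nh1 by (simp add: pos_le_divide_eq)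
    qed
    finally have "yv \<in> ball x \<rho>0" by (simp add: dist_commute)
    then have "ereal (infdist yv S) \<le> ereal \<tau> * max (\<phi> yv) 0" using eb by blast
    also have "\<dots> \<le> ereal \<tau> * ereal ((1 + \<epsilon>) * t)"
      using phiy th e tau by (intro ereal_mult_left_mono) (auto simp: yv_def)
    finally have idy: "infdist yv S \<le> \<tau> * (1 + \<epsilon>) * t" by simp
    obtain s where s: "s \<in> S" "dist yv s < infdist yv S + \<epsilon> * t"
      using infdist_approx[OF Sne, of "\<epsilon> * t" yv] e th by auto
    have dys: "dist yv s < t * (\<tau> * (1 + \<epsilon>) + \<epsilon>)" using s idy by (simp add: algebra_simps)
    have "norm (s - x) \<le> dist s yv + dist yv x"
      by (metis dist_norm dist_triangle)
    also have "\<dots> \<le> t * (\<tau> * (1 + \<epsilon>) + \<epsilon>) + t * (norm h + 1)"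
      using dys \<open>dist yv x = t * norm h'\<close> \<open>t * norm h' \<le> t * (norm h + 1)\<close> by (simp add: dist_commute)
    also have "\<dots> \<le> t * K1"
    proof -
      have "\<epsilon> * \<tau> \<le> 1 * \<tau>" using e tau by (intro mult_right_mono) auto
      moreover have "\<tau> * (1 + \<epsilon>) = \<tau> + \<epsilon> * \<tau>" by (simp add: algebra_simps)
      ultimately have "\<tau> * (1 + \<epsilon>) + \<epsilon> + (norm h + 1) \<le> K1" using e tau unfolding K1_def by linarith
      then show ?thesis using th by (simp add: distrib_left[symmetric] mult_left_mono)
    qed
    finally have nsx: "norm (s - x) \<le> t * K1" .
    also have "\<dots> < \<rho> * K1" using th K1 by simp
    also have "\<dots> \<le> \<delta>s" proof -
      have "\<rho> \<le> \<delta>s / K1" by (simp add: \<rho>_def)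
      then show ?thesis using K1 by (simp add: pos_le_divide_eq)
    qed
    finally have "s \<in> ball x \<delta>s" by (simp add: dist_norm norm_minus_commute)
    then have "infdist (s - x) ?T \<le> \<epsilon> * norm (s - x)" using shp s xS ds by auto
    also have "\<dots> \<le> \<epsilon> * (t * K1)" using nsx e by simp
    finally have id1: "infdist (s - x) ?T \<le> \<epsilon> * (t * K1)" .
    define v where "v = (1/t) *\<^sub>R (s - x)"
    have "infdist v ?T \<le> (1/t) * infdist (s - x) ?T"
      unfolding v_def using th by (intro infdist_scale_le bouligand_scale Tne) auto
    also have "\<dots> \<le> (1/t) * (\<epsilon> * (t * K1))" using id1 th by (intro mult_left_mono) auto
    also have "\<dots> = \<epsilon> * K1" using th by simp
    finally have iv: "infdist v ?T \<le> \<epsilon> * K1" .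
    have "dist h' v = dist yv s / t"
    proof -
      have "h' - v = (1/t) *\<^sub>R (yv - s)" using th by (simp add: v_def yv_def algebra_simps)
      then show ?thesis using th by (simp add: dist_norm)
    qed
    also have "\<dots> < \<tau> * (1 + \<epsilon>) + \<epsilon>" using dys th by (simp add: field_simps)
    finally have dhv: "dist h v < \<epsilon> + (\<tau> * (1 + \<epsilon>) + \<epsilon>)"
      using th(4) dist_triangle[of h v h'] by (simp add: dist_commute)
    have "infdist h ?T \<le> infdist v ?T + dist h v" by (rule infdist_triangle)
    also have "\<dots> \<le> \<epsilon> * K1 + (\<epsilon> + (\<tau> * (1 + \<epsilon>) + \<epsilon>))" using iv dhv by simp
    also have "\<dots> = \<tau> + \<epsilon> * (K1 + 2 + \<tau>)" by (simp add: algebra_simps)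
    finally show "infdist h ?T \<le> \<tau> + \<epsilon> * (K1 + 2 + \<tau>)" .
  qed
qed



lemma dir1:
  fixes \<phi> :: "'a::real_normed_vector \<Rightarrow> ereal"
  assumes lsc: "lsc \<phi>" and fr: "frontier (sublevel0 \<phi>) \<subseteq> \<phi> -` {0}"
    and sha: "shapiro_around (sublevel0 \<phi>) xb"
    and tau: "\<tau> > 0" and eb: "error_bound_with \<phi> xb \<tau>"
  shows "limsup_within (frontier (sublevel0 \<phi>)) xb
     (\<lambda>x. excess {h. hadamard_dd \<phi> x h \<le> 1} (bouligand_cone (sublevel0 \<phi>) x)) \<le> ereal \<tau>"
proof -
  let ?S = "sublevel0 \<phi>"
  have cS: "closed ?S" using lsc by (rule lsc_closed)
  obtain \<delta> where d: "\<delta> > 0" "\<forall>x\<in>ball xb \<delta>. ereal (infdist x ?S) \<le> ereal \<tau> * max (\<phi> x) 0"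
    using eb by (auto simp: error_bound_with_def)
  obtain U where U: "open U" "xb \<in> U" "\<forall>u\<in>?S \<inter> U. shapiro_at ?S u"
    using sha by (auto simp: shapiro_around_def)
  obtain e where e: "e > 0" "ball xb e \<subseteq> U" using U open_contains_ball by blast
  define \<delta>1 where "\<delta>1 = min \<delta> e"
  have d1: "\<delta>1 > 0" using d e by (simp add: \<delta>1_def)
  let ?G = "\<lambda>x. excess {h. hadamard_dd \<phi> x h \<le> 1} (bouligand_cone ?S x)"
  let ?term = "\<lambda>\<delta>. if frontier ?S \<inter> ball xb \<delta> = {} then 0 else (SUP x\<in>frontier ?S \<inter> ball xb \<delta>. ?G x)"
  have "limsup_within (frontier ?S) xb ?G \<le> ?term \<delta>1"
    unfolding limsup_within_def by (rule INF_lower) (simp add: d1)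
  also have "?term \<delta>1 \<le> ereal \<tau>"
  proof (cases "frontier ?S \<inter> ball xb \<delta>1 = {}")
    case True then show ?thesis using tau by simp
  next
    case False
    have "(SUP x\<in>frontier ?S \<inter> ball xb \<delta>1. ?G x) \<le> ereal \<tau>"
    proof (rule SUP_least)
      fix x assume x: "x \<in> frontier ?S \<inter> ball xb \<delta>1"
      have xS: "x \<in> ?S" using x cS frontier_subset_closed by blast
      have \<phi>x: "\<phi> x = 0" using x fr by auto
      have xU: "x \<in> U" using x e by (auto simp: \<delta>1_def)
      have sh: "shapiro_at ?S x" using U xS xU by blast
      define \<rho>0 where "\<rho>0 = \<delta> - dist xb x"
      have r0: "\<rho>0 > 0" using x by (simp add: \<rho>0_def \<delta>1_def)
      have ebx: "\<forall>y\<in>ball x \<rho>0. ereal (infdist y ?S) \<le> ereal \<tau> * max (\<phi> y) 0"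
      proof
        fix y assume "y \<in> ball x \<rho>0"
        then have "y \<in> ball xb \<delta>" using dist_triangle[of xb y x] by (simp add: \<rho>0_def)
        then show "ereal (infdist y ?S) \<le> ereal \<tau> * max (\<phi> y) 0" using d by blast
      qed
      show "?G x \<le> ereal \<tau>"
        by (rule excess_le[OF bouligand_ne[OF xS]])
           (use dir1_point[OF xS \<phi>x sh r0 ebx tau] tau in auto)
    qed
    then show ?thesis using False by simp
  qed
  finally show ?thesis .
qed



lemma final_arith:
  fixes \<tau> L' g \<eta> \<epsilon> N a :: real
  assumes tau: "\<tau> > 0" and L: "0 \<le> L'" "L' < \<tau>" and g: "g = 1 - L'/\<tau>" and eta: "\<eta> = g/4"
    and eps: "\<epsilon> = g / (4 * (3 + 1/\<tau>) * (1 + L'))" and N: "N > 0" and a: "a > 0" "a * \<tau> < N"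
    and ineq: "(1 - 2*\<eta>) * N \<le> \<epsilon> * (2*N + a) + (a + \<epsilon> * (3*N + a)) * L'"
  shows False
proof -
  define c where "c = 1/\<tau>"
  have c: "c > 0" using tau by (simp add: c_def)
  have acn: "a < c * N" using a tau by (simp add: c_def field_simps)
  have gpos: "g > 0" using L tau by (simp add: g field_simps)
  have epos: "\<epsilon> > 0" using gpos L c by (simp add: eps c_def[symmetric])
  have e3: "\<epsilon> * (3 + c) * (1 + L') = g/4"
  proof -
    have d: "4 * (3 + c) * (1 + L') \<noteq> 0" using c L by auto
    have "\<epsilon> * (4 * (3 + c) * (1 + L')) = g" using d by (simp add: eps c_def[symmetric])
    then show ?thesis by (simp add: algebra_simps)
  qed
  have cl: "c * L' = 1 - g" by (simp add: g c_def)
  have A: "\<epsilon> * (2*N + a) + (a + \<epsilon> * (3*N + a)) * L' < \<epsilon> * (2*N + c*N) + (c*N + \<epsilon> * (3*N + c*N)) * L'"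
  proof -
    have "(c*N - a) * (\<epsilon> + L' + \<epsilon> * L') > 0"
      using acn epos L by (intro mult_pos_pos) (auto intro: add_pos_nonneg)
    then show ?thesis by (simp add: algebra_simps)
  qed
  have B: "\<epsilon> * (2*N + c*N) + (c*N + \<epsilon> * (3*N + c*N)) * L' \<le> N * (\<epsilon> * (3 + c) * (1 + L') + c * L')"
  proof -
    have "\<epsilon> * N * 0 \<le> \<epsilon> * N * 1" using epos N by simp
    then show ?thesis by (simp add: algebra_simps)
  qed
  have "(1 - 2*\<eta>) * N < N * (g/4 + (1 - g))" using ineq A B e3 cl by simp
  then have "N * g < 0" using eta gpos N by (simp add: algebra_simps)
  moreover have "N * g > 0" using gpos N by simp
  ultimately show False by simp
qed



lemma ekeland_dist:
  fixes S :: "'a::banach set"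
  assumes S: "closed S" "z \<in> S" and eta: "\<eta> > 0"
  shows "\<exists>s\<in>S. dist x s \<le> dist x z \<and> (\<forall>y\<in>S. dist x s \<le> dist x y + \<eta> * dist y s)"
proof -
  define f where "f = (\<lambda>y. dist x y)"
  define P where "P w = {y\<in>S. f y + \<eta> * dist y w \<le> f w}" for w
  have Pself: "w \<in> P w" if "w \<in> S" for w using that by (simp add: P_def)
  have Ptrans: "y \<in> P u" if "y \<in> P w" "w \<in> P u" for y w u
  proof -
    have "dist y u \<le> dist y w + dist w u" by (rule dist_triangle)
    then have "\<eta> * dist y u \<le> \<eta> * dist y w + \<eta> * dist w u"
      using eta by (metis distrib_left mult_left_mono less_imp_le)
    then show ?thesis using that by (auto simp: P_def)
  qed
  have Psub: "P w \<subseteq> S" for w by (auto simp: P_def)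
  have Pclosed: "closed (P w)" for w
  proof -
    have "P w = {y \<in> S. f y + \<eta> * dist y w \<le> f w}" by (simp add: P_def)
    moreover have "closed {y \<in> S. f y + \<eta> * dist y w \<le> (\<lambda>_. f w) y}"
      by (rule continuous_on_closed_Collect_le) (auto simp: f_def intro!: continuous_intros S)
    ultimately show ?thesis by simp
  qed
  have bdd: "bdd_below (f ` A)" for A by (auto simp: f_def intro!: bdd_belowI[of _ 0])
  define nxt where "nxt w n = (SOME y. y \<in> P w \<and> f y \<le> (INF q\<in>P w. f q) + 1/2^n)" for w and n::nat
  have nxt: "nxt w n \<in> P w \<and> f (nxt w n) \<le> (INF q\<in>P w. f q) + 1/2^n" if "w \<in> S" for w n
  proof -
    have ne: "P w \<noteq> {}" using Pself[OF that] by auto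
    have "(INF q\<in>P w. f q) < (INF q\<in>P w. f q) + 1/2^n" by simp
    then obtain y where "y \<in> P w" "f y < (INF q\<in>P w. f q) + 1/2^n"
      using cINF_less_iff[OF ne bdd] by blast
    then have "\<exists>y. y \<in> P w \<and> f y \<le> (INF q\<in>P w. f q) + 1/2^n" by force
    then show ?thesis unfolding nxt_def by (rule someI_ex)
  qed
  define zs where "zs = rec_nat z (\<lambda>n w. nxt w n)"
  have zs0: "zs 0 = z" and zsS': "zs (Suc n) = nxt (zs n) n" for n by (simp_all add: zs_def)
  have zsS: "zs n \<in> S" for n
  proof (induction n)
    case 0 then show ?case using S by (simp add: zs0)
  next
    case (Suc n) then show ?case using nxt[OF Suc] Psub by (auto simp: zsS')
  qed
  have step: "zs (Suc n) \<in> P (zs n)" "f (zs (Suc n)) \<le> (INF q\<in>P (zs n). f q) + 1/2^n" for n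
    using nxt[OF zsS[of n]] by (auto simp: zsS')
  have inP: "zs m \<in> P (zs n)" if "n \<le> m" for m n
    using that
  proof (induction m rule: dec_induct)
    case base then show ?case using Pself zsS by blast
  next
    case (step m) then show ?case using Ptrans \<open>zs (Suc m) \<in> P (zs m)\<close> by blast
  qed
  have small: "\<eta> * dist y (zs (Suc n)) \<le> 1/2^n" if y: "y \<in> P (zs (Suc n))" for y n
  proof -
    have "y \<in> P (zs n)" using Ptrans[OF y step(1)] .
    then have "(INF q\<in>P (zs n). f q) \<le> f y" by (rule cINF_lower[OF bdd])
    with step(2)[of n] y show ?thesis by (auto simp: P_def)
  qed
  have dz: "dist (zs m) (zs (Suc n)) \<le> 1/(\<eta> * 2^n)" if "Suc n \<le> m" for m n
    using small[OF inP[OF that]] eta by (simp add: field_simps)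
  have "Cauchy zs"
  proof (rule metric_CauchyI)
    fix e :: real assume e: "0 < e"
    obtain N where N: "(1/2::real)^N < \<eta> * e / 2" using real_arch_pow_inv[of "\<eta>*e/2" "1/2"] e eta by auto
    have "1/(\<eta> * 2^N) < e/2"
      using N eta by (simp add: field_simps power_divide)
    show "\<exists>M. \<forall>m\<ge>M. \<forall>n\<ge>M. dist (zs m) (zs n) < e"
    proof (intro exI allI impI)
      fix m n assume "Suc N \<le> m" "Suc N \<le> n"
      have "dist (zs m) (zs n) \<le> dist (zs m) (zs (Suc N)) + dist (zs n) (zs (Suc N))"
        by (rule dist_triangle2)
      also have "\<dots> \<le> 1/(\<eta> * 2^N) + 1/(\<eta> * 2^N)"
        using dz \<open>Suc N \<le> m\<close> \<open>Suc N \<le> n\<close> by (meson add_mono)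
      also have "\<dots> < e" using \<open>1/(\<eta> * 2^N) < e/2\<close> by simp
      finally show "dist (zs m) (zs n) < e" .
    qed
  qed
  then obtain s where lim: "zs \<longlonglongrightarrow> s" using Cauchy_convergent convergent_def by blast
  have sP: "s \<in> P (zs n)" for n
    by (rule Lim_in_closed_set[OF Pclosed _ _ lim]) (auto simp: eventually_sequentially intro!: exI[of _ n] inP)
  have sS: "s \<in> S" using sP Psub by blast
  have sz: "f s \<le> f z" using sP[of 0] eta by (auto simp: P_def zs0 intro: order_trans[rotated] add_increasing2)
  have opt: "f s \<le> f y + \<eta> * dist y s" if yS: "y \<in> S" for y
  proof (rule ccontr)
    assume nt: "\<not> ?thesis"
    then have "y \<in> P s" using yS by (auto simp: P_def)
    then have yP: "y \<in> P (zs n)" for n using Ptrans sP by blast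
    have "(\<lambda>n. zs (Suc n)) \<longlonglongrightarrow> y"
    proof (rule tendsto_dist_iff[THEN iffD2], rule Lim_null_comparison)
      show "\<forall>\<^sub>F n in sequentially. norm (dist (zs (Suc n)) y) \<le> 1/\<eta> * (1/2)^n"
        using small[OF yP] eta by (auto simp: field_simps dist_commute power_divide)
      show "(\<lambda>n. 1/\<eta> * (1/2::real)^n) \<longlonglongrightarrow> 0"
        by (intro tendsto_mult_right_zero LIMSEQ_power_zero) auto
    qed
    moreover have "(\<lambda>n. zs (Suc n)) \<longlonglongrightarrow> s" using LIMSEQ_Suc[OF lim] .
    ultimately have "y = s" using LIMSEQ_unique by blast
    then show False using nt by simp
  qed
  show ?thesis using sS sz opt by (auto simp: f_def)
qed



lemma dir2:
  fixes \<phi> :: "'a::banach \<Rightarrow> ereal"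
  assumes lsc: "lsc \<phi>" and xbS: "xb \<in> sublevel0 \<phi>" and fr: "frontier (sublevel0 \<phi>) \<subseteq> \<phi> -` {0}"
    and epis: "epi_shapiro_at \<phi> xb" and tau: "\<tau> > 0"
    and lim: "limsup_within (frontier (sublevel0 \<phi>)) xb
     (\<lambda>x. excess {h. hadamard_dd \<phi> x h \<le> 1} (bouligand_cone (sublevel0 \<phi>) x)) < ereal \<tau>"
  shows "error_bound_with \<phi> xb \<tau>"
proof -
  let ?S = "sublevel0 \<phi>"
  let ?T = "bouligand_cone ?S"
  let ?G = "\<lambda>x. excess {h. hadamard_dd \<phi> x h \<le> 1} (bouligand_cone ?S x)"
  have cS: "closed ?S" using lsc by (rule lsc_closed)
  have rhs_nn: "0 \<le> ereal \<tau> * max (\<phi> x) 0" for x using tau by simp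
  show ?thesis
  proof (cases "xb \<in> interior ?S")
    case True
    then obtain e where e: "e > 0" "ball xb e \<subseteq> ?S"
      using True interior_subset open_contains_ball_eq open_interior subset_trans by meson
    show ?thesis unfolding error_bound_with_def
    proof (intro exI[of _ e] conjI ballI e(1))
      fix x assume "x \<in> ball xb e"
      then have "x \<in> ?S" using e by blast
      then show "ereal (infdist x ?S) \<le> ereal \<tau> * max (\<phi> x) 0" using rhs_nn[of x] by (simp add: zero_ereal_def)
    qed
  next
    case False
    then have xbF: "xb \<in> frontier ?S" using xbS cS by (simp add: frontier_def closure_closed)
    then have \<phi>xb: "\<phi> xb = 0" using fr by auto
    define L where "L = limsup_within (frontier ?S) xb ?G"
    have L0: "L \<ge> 0" unfolding L_def by (rule limsup_within_nonneg) (rule excess_nonneg)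
    have Lt: "L < ereal \<tau>" using lim by (simp add: L_def)
    obtain l where l: "L = ereal l" using L0 Lt by (cases L) auto
    have l0: "0 \<le> l" "l < \<tau>" using L0 Lt l by auto
    define L' where "L' = (l + \<tau>) / 2"
    have L': "l < L'" "L' < \<tau>" "0 \<le> L'" using l0 by (auto simp: L'_def)
    have "L < ereal L'" using l L' by simp
    then obtain \<delta>0 where d0: "\<delta>0 > 0" and trm: "(if frontier ?S \<inter> ball xb \<delta>0 = {} then 0
        else (SUP x\<in>frontier ?S \<inter> ball xb \<delta>0. ?G x)) < ereal L'"
      using INF_less_iff[THEN iffD1, OF \<open>L < ereal L'\<close>[unfolded L_def limsup_within_def]] by auto
    have Hs: "infdist h (?T s) \<le> L'" if s: "s \<in> frontier ?S \<inter> ball xb \<delta>0" and h: "hadamard_dd \<phi> s h \<le> 1" for s h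
    proof -
      have sS: "s \<in> ?S" using s cS frontier_subset_closed by blast
      have "ereal (infdist h (?T s)) \<le> ?G s" using h by (intro excess_ge bouligand_ne[OF sS]) auto
      also have "?G s \<le> (SUP x\<in>frontier ?S \<inter> ball xb \<delta>0. ?G x)" using s by (rule SUP_upper)
      also have "\<dots> < ereal L'" using trm s by (auto split: if_splits)
      finally show ?thesis by simp
    qed
    define g where "g = 1 - L'/\<tau>"
    define \<eta> where "\<eta> = g/4"
    define \<epsilon> where "\<epsilon> = g / (4 * (3 + 1/\<tau>) * (1 + L'))"
    have gpos: "g > 0" "g \<le> 1" using L' tau by (auto simp: g_def field_simps)
    have eta: "0 < \<eta>" "\<eta> < 1" using gpos by (auto simp: \<eta>_def)
    have epos: "\<epsilon> > 0" unfolding \<epsilon>_def using gpos L' tau by (intro divide_pos_pos mult_pos_pos) (auto intro: add_pos_nonneg)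
    have epi_unf: "closed (epi \<phi>) \<and> \<bar>\<phi> xb\<bar> \<noteq> \<infinity> \<and>
      (\<forall>\<epsilon>>0. \<exists>\<delta>>0. \<forall>p\<in>epi \<phi>. \<forall>q\<in>epi \<phi>. sum_norm (p - (xb, 0)) < \<delta> \<longrightarrow> sum_norm (q - (xb, 0)) < \<delta> \<longrightarrow>
          (INF w\<in>bouligand_cone (epi \<phi>) q. sum_norm (p - q - w)) \<le> \<epsilon> * sum_norm (p - q))"
      using epis unfolding epi_shapiro_at_def Let_def \<phi>xb real_of_ereal_0 .
    then obtain \<delta>e where de: "\<delta>e > 0" and esh: "\<forall>p\<in>epi \<phi>. \<forall>q\<in>epi \<phi>. sum_norm (p - (xb, 0)) < \<delta>e \<longrightarrow> sum_norm (q - (xb, 0)) < \<delta>e \<longrightarrow>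
          (INF w\<in>bouligand_cone (epi \<phi>) q. sum_norm (p - q - w)) \<le> \<epsilon> * sum_norm (p - q)"
      using epos by blast
    define \<delta> where "\<delta> = min \<delta>0 \<delta>e / (2 + 1/\<tau>)"
    have tp: "2 + 1/\<tau> > 0" using tau by (simp add: add_pos_pos)
    have dpos: "\<delta> > 0" using d0 de tp by (simp add: \<delta>_def)
    have deq: "\<delta> * (2 + 1/\<tau>) = min \<delta>0 \<delta>e" using tp by (simp add: \<delta>_def)
    have dle: "\<delta> * (2 + 1/\<tau>) \<le> \<delta>0" "\<delta> * (2 + 1/\<tau>) \<le> \<delta>e" using deq by auto
    show ?thesis unfolding error_bound_with_def
    proof (intro exI[of _ \<delta>] conjI ballI dpos)
      fix x assume x: "x \<in> ball xb \<delta>"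
      show "ereal (infdist x ?S) \<le> ereal \<tau> * max (\<phi> x) 0"
      proof (cases "\<phi> x \<le> 0")
        case True
        then have "x \<in> ?S" by (simp add: sublevel0_def)
        then show ?thesis using rhs_nn[of x] by (simp add: zero_ereal_def)
      next
        case False
        show ?thesis
        proof (cases "\<phi> x = \<infinity>")
          case True then show ?thesis using tau by simp
        next
          case False2: False
          then obtain a where a: "\<phi> x = ereal a" "a > 0" using False by (cases "\<phi> x") auto
          show ?thesis
          proof (rule ccontr)
            assume "\<not> ?thesis"
            then have ta: "\<tau> * a < infdist x ?S" using a tau by simp
            have Sne: "?S \<noteq> {}" using xbS by blast
            have rle: "infdist x ?S \<le> dist x xb" using xbS by (rule infdist_le)
            obtain s0 where s0S: "s0 \<in> ?S" and s0d: "dist x s0 \<le> dist x xb"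
              and opt: "\<forall>y\<in>?S. dist x s0 \<le> dist x y + \<eta> * dist y s0"
              using ekeland_dist[OF cS xbS eta(1)] by blast
            define N where "N = dist x s0"
            have rN: "infdist x ?S \<le> N" using s0S by (simp add: N_def infdist_le)
            have apos: "0 < \<tau> * a" using tau a by simp
            have Npos: "N > 0" using rN ta apos by linarith
            have s0F: "s0 \<in> frontier ?S"
            proof -
              have "s0 \<notin> interior ?S"
              proof
                assume "s0 \<in> interior ?S"
                then obtain e' where e': "e' > 0" "ball s0 e' \<subseteq> ?S" using interior_subset open_contains_ball_eq open_interior subset_trans by meson
                define t where "t = min (1/2) (e' / (2 * N))"
                have t: "0 < t" "t \<le> 1/2" "t * N \<le> e'/2" using e' Npos
                  by (auto simp: t_def min_def field_simps)
                define y where "y = s0 + t *\<^sub>R (x - s0)"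
                have dys: "dist y s0 = t * N" using t by (simp add: y_def N_def dist_norm norm_minus_commute)
                have "y \<in> ?S" using e' dys t by (auto simp: dist_commute)
                moreover have "dist x y = (1 - t) * N"
                proof -
                  have "x - y = (1 - t) *\<^sub>R (x - s0)" by (simp add: y_def algebra_simps)
                  then show ?thesis using t by (simp add: dist_norm N_def)
                qed
                ultimately have "N \<le> (1 - t) * N + \<eta> * (t * N)" using opt dys by (auto simp: N_def)
                then have "t * N * 1 \<le> t * N * \<eta>" by (simp add: algebra_simps)
                then have "1 \<le> \<eta>" using t Npos by (simp add: mult_le_cancel_left_pos)
                then show False using eta by simp
              qed
              then show ?thesis using s0S cS by (simp add: frontier_def closure_closed)
            qed
            have \<phi>s0: "\<phi> s0 = 0" using s0F fr by auto
            have dxb: "dist x xb < \<delta>" using x by (simp add: dist_commute)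
            have a_lt: "a < \<delta> / \<tau>"
            proof -
              have "\<tau> * a < \<delta>" using ta rle dxb by linarith
              then show ?thesis using tau by (simp add: field_simps)
            qed
            have ds0: "dist s0 xb < 2 * \<delta>"
              using dist_triangle[of s0 xb x] s0d dxb by (simp add: dist_commute)
            have two: "2 * \<delta> \<le> \<delta> * (2 + 1/\<tau>)" using dpos tau by (simp add: algebra_simps)
            have s0ball: "s0 \<in> frontier ?S \<inter> ball xb \<delta>0"
              using s0F ds0 two dle by (auto simp: dist_commute)
            have pE: "(x, a) \<in> epi \<phi>" using a by (simp add: epi_def)
            have qE: "(s0, 0) \<in> epi \<phi>" using \<phi>s0 by (simp add: epi_def)
            have pc: "sum_norm ((x, a) - (xb, 0)) < \<delta>e"
            proof -
              have "sum_norm ((x, a) - (xb, 0)) = dist x xb + a" using a by (simp add: sum_norm_def dist_norm)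
              also have "\<dots> < \<delta> + \<delta> / \<tau>" using dxb a_lt by simp
              also have "\<dots> = \<delta> * (2 + 1/\<tau>) - \<delta>" by (simp add: algebra_simps)
              finally show ?thesis using dle dpos by simp
            qed
            have qc: "sum_norm ((s0, 0) - (xb, 0)) < \<delta>e"
              using ds0 two dle by (simp add: sum_norm_def dist_norm)
            have INFle: "(INF w\<in>bouligand_cone (epi \<phi>) (s0, 0). sum_norm ((x, a) - (s0, 0) - w)) \<le> \<epsilon> * (N + a)"
            proof -
              have "(INF w\<in>bouligand_cone (epi \<phi>) (s0, 0). sum_norm ((x, a) - (s0, 0) - w)) \<le> \<epsilon> * sum_norm ((x, a) - (s0, 0))"
                using esh pE qE pc qc by blast
              moreover have "sum_norm ((x, a) - (s0, 0)) = N + a" using a by (simp add: sum_norm_def N_def dist_norm)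
              ultimately show ?thesis by simp
            qed
            have TEne: "bouligand_cone (epi \<phi>) (s0, 0) \<noteq> {}" using bouligand_ne[OF qE] .
            have "(INF w\<in>bouligand_cone (epi \<phi>) (s0, 0). sum_norm ((x, a) - (s0, 0) - w)) < \<epsilon> * (N + a) + \<epsilon> * N"
              using INFle mult_pos_pos[OF epos Npos] by linarith
            then obtain w where w: "w \<in> bouligand_cone (epi \<phi>) (s0, 0)"
              and wlt: "sum_norm ((x, a) - (s0, 0) - w) < \<epsilon> * (N + a) + \<epsilon> * N"
            proof -
              have bb: "bdd_below ((\<lambda>w. sum_norm ((x, a) - (s0, 0) - w)) ` bouligand_cone (epi \<phi>) (s0, 0))"
                by (rule bdd_belowI[of _ 0]) (auto simp: sum_norm_def)
              show ?thesis using cINF_less_iff[OF TEne bb] that \<open>(INF w\<in>bouligand_cone (epi \<phi>) (s0, 0). sum_norm ((x, a) - (s0, 0) - w)) < \<epsilon> * (N + a) + \<epsilon> * N\<close> by blast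
            qed
            obtain h \<alpha> where w_eq: "w = (h, \<alpha>)" by (cases w)
            have hw: "norm (x - s0 - h) + \<bar>a - \<alpha>\<bar> < \<epsilon> * (2 * N + a)"
              using wlt by (simp add: w_eq sum_norm_def algebra_simps)
            obtain ws ts where wt: "ws \<longlonglongrightarrow> (h, \<alpha>)" "ts \<longlonglongrightarrow> 0" "\<forall>n. ts n > 0"
                "\<forall>n. (s0, 0) + ts n *\<^sub>R ws n \<in> epi \<phi>"
              using w by (auto simp: bouligand_cone_def w_eq)
            have hs: "(\<lambda>n. fst (ws n)) \<longlonglongrightarrow> h" using tendsto_fst[OF wt(1)] by simp
            have as: "(\<lambda>n. snd (ws n)) \<longlonglongrightarrow> \<alpha>" using tendsto_snd[OF wt(1)] by simp
            have le: "\<forall>n. \<phi> (s0 + ts n *\<^sub>R fst (ws n)) \<le> ereal (ts n * snd (ws n))"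
            proof
              fix n
              show "\<phi> (s0 + ts n *\<^sub>R fst (ws n)) \<le> ereal (ts n * snd (ws n))"
                using wt(4)[rule_format, of n] by (cases "ws n") (simp add: epi_def)
            qed
            define \<beta> where "\<beta> = max \<alpha> 0 + \<epsilon> * N"
            have bpos: "\<beta> > 0" using epos Npos by (simp add: \<beta>_def add_nonneg_pos)
            have "hadamard_dd \<phi> s0 ((1/\<beta>) *\<^sub>R h) \<le> ereal (\<alpha>/\<beta>)"
              by (rule hd_from_seq[OF \<phi>s0 wt(2) wt(3) hs as le bpos])
            also have "\<alpha> / \<beta> \<le> 1" proof -
              have "\<alpha> \<le> \<beta>" using mult_pos_pos[OF epos Npos] by (simp add: \<beta>_def)
              then show ?thesis using bpos by (simp add: divide_le_eq_1)
            qed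
            finally have hd1: "hadamard_dd \<phi> s0 ((1/\<beta>) *\<^sub>R h) \<le> 1" by (simp add: one_ereal_def)
            have i1: "infdist ((1/\<beta>) *\<^sub>R h) (?T s0) \<le> L'" by (rule Hs[OF s0ball hd1])
            have "infdist h (?T s0) = infdist (\<beta> *\<^sub>R ((1/\<beta>) *\<^sub>R h)) (?T s0)" using bpos by simp
            also have "\<dots> \<le> \<beta> * infdist ((1/\<beta>) *\<^sub>R h) (?T s0)"
              using bpos by (intro infdist_scale_le bouligand_scale bouligand_ne[OF s0S]) auto
            also have "\<dots> \<le> \<beta> * L'" using i1 bpos by simp
            finally have ih: "infdist h (?T s0) \<le> \<beta> * L'" .
            have lowb: "(1 - 2*\<eta>) * N \<le> infdist (x - s0) (?T s0)"
              unfolding N_def by (rule tangent_lower[OF s0S opt eta(1)])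
            have "infdist (x - s0) (?T s0) \<le> infdist h (?T s0) + dist (x - s0) h" by (rule infdist_triangle)
            also have "\<dots> \<le> \<beta> * L' + norm (x - s0 - h)" using ih by (simp add: dist_norm)
            finally have up: "infdist (x - s0) (?T s0) \<le> \<beta> * L' + norm (x - s0 - h)" .
            have "\<beta> \<le> a + \<epsilon> * (3 * N + a)"
            proof -
              have "max \<alpha> 0 \<le> a + \<bar>a - \<alpha>\<bar>" using a by auto
              moreover have "\<bar>a - \<alpha>\<bar> \<le> \<epsilon> * (2 * N + a)" using hw norm_ge_zero[of "x - s0 - h"] by linarith
              moreover have "\<epsilon> * (3 * N + a) = \<epsilon> * (2 * N + a) + \<epsilon> * N" by (simp add: algebra_simps)
              ultimately show ?thesis unfolding \<beta>_def by linarith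
            qed
            then have bL: "\<beta> * L' \<le> (a + \<epsilon> * (3 * N + a)) * L'" using L' by (simp add: mult_right_mono)
            have fin: "(1 - 2*\<eta>) * N \<le> \<epsilon> * (2*N + a) + (a + \<epsilon> * (3*N + a)) * L'"
              using lowb up bL hw by linarith
            have "a * \<tau> < N" using ta rN by (simp add: mult.commute)
            show False
              by (rule final_arith[OF tau L'(3) L'(2) g_def \<eta>_def \<epsilon>_def Npos a(2) \<open>a * \<tau> < N\<close> fin])
          qed
        qed
      qed
    qed
  qed
qed



theorem theorem4p2:
  fixes \<phi> :: "'a::banach \<Rightarrow> ereal" and xb :: 'a
  assumes "proper_fun \<phi>" and "lsc \<phi>"
    and "xb \<in> sublevel0 \<phi>"
    and "frontier (sublevel0 \<phi>) \<subseteq> \<phi> -` {0}"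
    and "epi_shapiro_at \<phi> xb"
    and "shapiro_around (sublevel0 \<phi>) xb"
  shows "(local_error_bound \<phi> xb \<longleftrightarrow>
           limsup_within (frontier (sublevel0 \<phi>)) xb
             (\<lambda>x. excess {h. hadamard_dd \<phi> x h \<le> 1} (bouligand_cone (sublevel0 \<phi>) x)) < \<infinity>) \<and>
         eb_modulus \<phi> xb =
           limsup_within (frontier (sublevel0 \<phi>)) xb
             (\<lambda>x. excess {h. hadamard_dd \<phi> x h \<le> 1} (bouligand_cone (sublevel0 \<phi>) x))"
proof -
  define L where "L = limsup_within (frontier (sublevel0 \<phi>)) xb
             (\<lambda>x. excess {h. hadamard_dd \<phi> x h \<le> 1} (bouligand_cone (sublevel0 \<phi>) x))"
  have L0: "L \<ge> 0" unfolding L_def by (rule limsup_within_nonneg) (rule excess_nonneg)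
  have I: "L \<le> ereal \<tau>" if "\<tau> > 0" "error_bound_with \<phi> xb \<tau>" for \<tau>
    unfolding L_def by (rule dir1[OF assms(2) assms(4) assms(6) that])
  have II: "error_bound_with \<phi> xb \<tau>" if "\<tau> > 0" "L < ereal \<tau>" for \<tau>
    using dir2[OF assms(2) assms(3) assms(4) assms(5) that(1)] that(2) by (simp add: L_def)
  have eq1: "local_error_bound \<phi> xb \<longleftrightarrow> L < \<infinity>"
  proof
    assume "local_error_bound \<phi> xb"
    then obtain \<tau> where "\<tau> > 0" "error_bound_with \<phi> xb \<tau>" by (auto simp: local_error_bound_def)
    then have "L \<le> ereal \<tau>" by (rule I)
    then show "L < \<infinity>" by (cases L) auto
  next
    assume "L < \<infinity>"
    then obtain l where l: "L = ereal l" using L0 by (cases L) auto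
    then have "l \<ge> 0" using L0 by simp
    then have "error_bound_with \<phi> xb (l + 1)" using l by (intro II) auto
    then show "local_error_bound \<phi> xb" using \<open>l \<ge> 0\<close> unfolding local_error_bound_def
      by (intro exI[of _ "l + 1"]) auto
  qed
  have eq2: "eb_modulus \<phi> xb = L"
  proof (rule antisym)
    show "L \<le> eb_modulus \<phi> xb"
      unfolding eb_modulus_def by (rule Inf_greatest) (auto intro: I)
  next
    show "eb_modulus \<phi> xb \<le> L"
    proof (cases "L = \<infinity>")
      case True then show ?thesis by simp
    next
      case False
      then obtain l where l: "L = ereal l" using L0 by (cases L) auto
      then have l0: "l \<ge> 0" using L0 by simp
      show ?thesis
      proof (rule ereal_le_epsilon2)
        fix e :: real assume e: "0 < e"
        have "error_bound_with \<phi> xb (l + e)" using l l0 e by (intro II) auto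
        then have "ereal (l + e) \<in> ereal ` {\<tau>. \<tau> > 0 \<and> error_bound_with \<phi> xb \<tau>}" using l0 e by auto
        then have "eb_modulus \<phi> xb \<le> ereal (l + e)" unfolding eb_modulus_def by (rule Inf_lower)
        then show "eb_modulus \<phi> xb \<le> L + ereal e" using l by simp
      qed
    qed
  qed
  show ?thesis using eq1 eq2 by (simp add: L_def)
qed


end
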